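(* If a Riordan matrix $(g,f)$ has a type-I $B$-sequence, then it belongs to $R_{0,2}$, the set of Riordan matrices whose $A$-sequence $(a_j)_{j\ge0}$ satisfies $a_0=1$ and $a_2=0$ (which is a subgroup of the Riordan group).
   Context: Let $K$ be $\mathbb{R}$ or $\mathbb{C}$. A (proper) Riordan matrix is a pair $(g,f)$ of formal power series in $K[[t]]$ with $g(0)=1$, $f(0)=0$, $f'(0)\neq 0$, identified with the infinite lower triangular matrix $(d_{n,k})_{n,k\ge0}$, $d_{n,k}=[t^n]g(t)f(t)^k$; we set $d_{n,k}=0$ if $n<0$, $k<0$ or $k>n$. The $A$-sequence $(a_j)_{j\ge0}$ is the unique sequence whose generating function $A(t)$ satisfies $f(t)=tA(f(t))$. A type-I $B$-sequence of $(g,f)$ is a sequence $(b_j)_{j\ge0}$ such that $d_{n+1,k}=d_{n,k-1}+\sum_{j\ge0}b_j d_{n-j,k+j}$ for all $n\ge0$ and $k\ge1$. *)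

theory Defs
  imports "HOL-Computational_Algebra.Formal_Power_Series" Complex_Main
begin

text \<open>The scalar field K is R or C; we use the class real_normed_field
(commutative real normed division algebras, i.e. exactly R and C up to isomorphism).\<close>

definition riordan :: "'a::real_normed_field fps \<Rightarrow> 'a fps \<Rightarrow> bool" where
  "riordan g f \<longleftrightarrow> fps_nth g 0 = 1 \<and> fps_nth f 0 = 0 \<and> fps_nth f 1 \<noteq> 0"

definition riordan_entry :: "'a::real_normed_field fps \<Rightarrow> 'a fps \<Rightarrow> int \<Rightarrow> int \<Rightarrow> 'a" where
  "riordan_entry g f n k =
     (if n < 0 \<or> k < 0 \<or> k > n then 0 else fps_nth (g * f ^ nat k) (nat n))"

definition is_A_seq :: "'a::real_normed_field fps \<Rightarrow> 'a fps \<Rightarrow> bool" where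
  "is_A_seq f A \<longleftrightarrow> f = fps_X * fps_compose A f"

definition A_seq :: "'a::real_normed_field fps \<Rightarrow> 'a fps" where
  "A_seq f = (THE A. is_A_seq f A)"

text \<open>Type-I B-sequence: d_{n+1,k} = d_{n,k-1} + sum_{j>=0} b_j d_{n-j,k+j}, n>=0, k>=1.
  Terms with j > n vanish (d_{n-j,.} = 0 for n-j<0), so the series is the finite sum over j<=n.\<close>
definition has_typeI_B_seq :: "'a::real_normed_field fps \<Rightarrow> 'a fps \<Rightarrow> bool" where
  "has_typeI_B_seq g f \<longleftrightarrow> (\<exists>b :: nat \<Rightarrow> 'a. \<forall>n::nat. \<forall>k::int. k \<ge> 1 \<longrightarrow>
      riordan_entry g f (int n + 1) k =
        riordan_entry g f (int n) (k - 1)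
        + (\<Sum>j\<le>n. b j * riordan_entry g f (int n - int j) (k + int j)))"

definition R02 :: "('a::real_normed_field fps \<times> 'a fps) set" where
  "R02 = {(g, f). riordan g f \<and> fps_nth (A_seq f) 0 = 1 \<and> fps_nth (A_seq f) 2 = 0}"

end

theory Submission
  imports Defs
begin

lemma A_exists:
  fixes f :: "'a::real_normed_field fps"
  assumes "(fps_nth f 0) = 0" "(fps_nth f 1) \<noteq> 0"
  shows "is_A_seq f (fps_shift 1 f oo fps_inv f)"
proof -
  have i0: "fps_nth (fps_inv f) 0 = 0" by (simp add: fps_inv_def)
  have "fps_shift 1 f oo fps_inv f oo f = fps_shift 1 f oo (fps_inv f oo f)"
    using fps_compose_assoc[of f "fps_inv f" "fps_shift 1 f"] assms i0 by simp
  also have "\<dots> = fps_shift 1 f" using fps_inv[OF assms] by simp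
  finally have "fps_shift 1 f oo fps_inv f oo f = fps_shift 1 f" .
  moreover have "fps_X * fps_shift 1 f = f"
    using assms by (intro fps_ext) (simp add: fps_X_mult_nth)
  ultimately show ?thesis unfolding is_A_seq_def by simp
qed

lemma A_unique:
  fixes f :: "'a::real_normed_field fps"
  assumes "(fps_nth f 0) = 0" "(fps_nth f 1) \<noteq> 0" "is_A_seq f A" "is_A_seq f B"
  shows "A = B"
proof -
  have "fps_X * (A oo f) = fps_X * (B oo f)" using assms(3,4) unfolding is_A_seq_def by simp
  hence e: "A oo f = B oo f" by simp
  have i0: "fps_nth (fps_inv f) 0 = 0" by (simp add: fps_inv_def)
  have "A = A oo (f oo fps_inv f)" using fps_inv_right[OF assms(1,2)] by simp
  also have "\<dots> = (A oo f) oo fps_inv f" using fps_compose_assoc assms i0 by blast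
  also have "\<dots> = (B oo f) oo fps_inv f" using e by simp
  also have "\<dots> = B oo (f oo fps_inv f)" using fps_compose_assoc assms i0 by metis
  also have "\<dots> = B" using fps_inv_right[OF assms(1,2)] by simp
  finally show ?thesis .
qed

theorem theorem4p3:
  fixes g f :: "'a::real_normed_field fps"
  assumes "riordan g f"
    and "has_typeI_B_seq g f"
  shows "(g, f) \<in> R02"
proof -
  have g0: "(fps_nth g 0) = 1" and f0: "(fps_nth f 0) = 0" and f1: "(fps_nth f 1) \<noteq> 0" using assms(1) unfolding riordan_def by auto
  have Aseq: "is_A_seq f (A_seq f)"
    unfolding A_seq_def by (rule theI[of "is_A_seq f", OF A_exists[OF f0 f1]]) (use A_unique[OF f0 f1] A_exists[OF f0 f1] in blast)
  define A where "A = A_seq f"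
  have fe: "f = fps_X * (A oo f)" using Aseq unfolding A_def is_A_seq_def .
  have c: "fps_nth f (Suc n) = fps_nth (A oo f) n" for n
    by (subst fe) simp
  have p2: "fps_nth (f^2) 2 = ((fps_nth f 1))^2" using f0 by (simp add: power2_eq_square fps_mult_nth numeral_2_eq_2 atLeast0_atMost_Suc)
  have e1: "(fps_nth f 1) = (fps_nth A 0)" using c[of 0] by simp
  have e2: "(fps_nth f 2) = (fps_nth A 1) * (fps_nth f 1)" using c[of 1] f0 by (simp add: fps_compose_nth numeral_2_eq_2)
  have e3: "(fps_nth f 3) = (fps_nth A 1) * (fps_nth f 2) + (fps_nth A 2) * ((fps_nth f 1))^2" using c[of 2] f0 p2
    by (simp add: fps_compose_nth numeral_3_eq_3 numeral_2_eq_2 atLeast0_atMost_Suc)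
  obtain b where B: "\<And>n k. k \<ge> 1 \<Longrightarrow> riordan_entry g f (int n + 1) k =
        riordan_entry g f (int n) (k - 1)
        + (\<Sum>j\<le>n. b j * riordan_entry g f (int n - int j) (k + int j))"
    using assms(2) unfolding has_typeI_B_seq_def by blast
  let ?d = "riordan_entry g f"
  have R0: "?d 1 1 = ?d 0 0 + b 0 * ?d 0 1" using B[where n=0 and k=1] by simp
  have R1: "?d 2 1 = ?d 1 0 + (b 0 * ?d 1 1 + b 1 * ?d 0 2)" using B[where n=1 and k=1] by (simp add: atMost_Suc)
  have R2: "?d 3 1 = ?d 2 0 + (b 0 * ?d 2 1 + b 1 * ?d 1 2 + b 2 * ?d 0 3)"
    using B[where n=2 and k=1] by (simp add: atMost_Suc numeral_2_eq_2 add.commute)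
  have d00: "?d 0 0 = 1" using g0 by (simp add: riordan_entry_def)
  have dz: "?d 0 1 = 0" "?d 0 2 = 0" "?d 0 3 = 0" "?d 1 2 = 0" by (simp_all add: riordan_entry_def)
  have d10: "?d 1 0 = fps_nth g 1" by (simp add: riordan_entry_def)
  have d20: "?d 2 0 = fps_nth g 2" by (simp add: riordan_entry_def)
  have d11: "?d 1 1 = fps_nth f 1" using g0 f0 by (simp add: riordan_entry_def fps_mult_nth)
  have d21: "?d 2 1 = fps_nth f 2 + fps_nth g 1 * fps_nth f 1" using g0 f0
    by (simp add: riordan_entry_def fps_mult_nth numeral_2_eq_2 atLeast0_atMost_Suc)
  have d31: "?d 3 1 = fps_nth f 3 + fps_nth g 1 * fps_nth f 2 + fps_nth g 2 * fps_nth f 1" using g0 f0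
    by (simp add: riordan_entry_def fps_mult_nth numeral_3_eq_3 numeral_2_eq_2 atLeast0_atMost_Suc)
  have B0: "fps_nth f 1 = 1" using R0 d00 dz d11 by simp
  have B1: "fps_nth f 2 + fps_nth g 1 = fps_nth g 1 + b 0" using R1 d10 d11 d21 dz B0 by simp
  have B2: "fps_nth f 3 + fps_nth g 1 * fps_nth f 2 + fps_nth g 2 = fps_nth g 2 + b 0 * (fps_nth f 2 + fps_nth g 1)"
    using R2 d20 d21 d31 dz B0 by simp
  have "(fps_nth A 0) = 1" using e1 B0 by simp
  moreover have "(fps_nth A 2) = 0" using e2 e3 B0 B1 B2 by (simp add: algebra_simps power2_eq_square)
  ultimately show ?thesis using assms(1) unfolding R02_def A_def by simp
qed

end
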